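(* Let $P:\{-1,1\}^k\to\{0,1\}$ be a predicate and $Q:\{-1,1\}^k\to\mathbb{R}$. Then $P$ is information-theoretically useless for $Q$ if and only if there exists a probability measure $\mu$ on $\{-1,1\}^k$ supported on $P^{-1}(1)$ such that $\mathrm{Opt}(Q,\mu)=E_Q$.
   Context: Boolean values are encoded as $\pm1$. An instance of Max-$P$ on variables $x_1,\dots,x_n$ consists of $m$ constraints; constraint $j$ is given by indices $a_j^1,\dots,a_j^k\in[n]$, pairwise distinct within the constraint, and signs $b_j^1,\dots,b_j^k\in\{-1,1\}$. For $x\in\{-1,1\}^n$, $x_{a_j}^{b_j}\in\{-1,1\}^k$ denotes the string with $i$-th coordinate $b_j^i x_{a_j^i}$. $E_Q=\mathbb{E}_{x\in\{-1,1\}^k}[Q(x)]$ for uniform $x$. $P$ is information-theoretically useless for $Q$ if for every $\epsilon>0$ there is an instance with $\max_x\frac1m\sum_j P(x_{a_j}^{b_j})=1$ and $\max_x\frac1m\sum_j Q(x_{a_j}^{b_j})\le E_Q+\epsilon$. For a probability measure $\mu$ on $\{-1,1\}^k$ and $p\in[0,1]$, $\mu^p$ is the distribution obtained by sampling a string from $\mu$ and then independently flipping each coordinate with probability $p$. $\mathrm{Opt}(Q,\mu)=\max_{p\in[0,1]}\mathbb{E}_{x\sim\mu^p}[Q(x)]$. *)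

theory Defs
  imports "HOL-Probability.Probability"
begin

definition cube :: "nat \<Rightarrow> int list set" where
  "cube k = {x. length x = k \<and> set x \<subseteq> {-1, 1}}"

definition valid_constraint :: "nat \<Rightarrow> nat \<Rightarrow> nat list \<times> int list \<Rightarrow> bool" where
  "valid_constraint k n c \<longleftrightarrow> length (fst c) = k \<and> length (snd c) = k \<and>
     distinct (fst c) \<and> set (fst c) \<subseteq> {..<n} \<and> set (snd c) \<subseteq> {-1, 1}"

definition valid_instance :: "nat \<Rightarrow> nat \<Rightarrow> (nat list \<times> int list) list \<Rightarrow> bool" where
  "valid_instance k n I \<longleftrightarrow> I \<noteq> [] \<and> (\<forall>c\<in>set I. valid_constraint k n c)"

definition restrict_str :: "int list \<Rightarrow> nat list \<times> int list \<Rightarrow> int list" where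
  "restrict_str x c = map2 (\<lambda>ai bi. bi * x ! ai) (fst c) (snd c)"

definition inst_value :: "(int list \<Rightarrow> real) \<Rightarrow> (nat list \<times> int list) list \<Rightarrow> int list \<Rightarrow> real" where
  "inst_value F I x = (\<Sum>c\<leftarrow>I. F (restrict_str x c)) / real (length I)"

definition inst_opt :: "nat \<Rightarrow> (int list \<Rightarrow> real) \<Rightarrow> (nat list \<times> int list) list \<Rightarrow> real" where
  "inst_opt n F I = Max ((inst_value F I) ` cube n)"

definition E_unif :: "nat \<Rightarrow> (int list \<Rightarrow> real) \<Rightarrow> real" where
  "E_unif k Q = (\<Sum>x\<in>cube k. Q x) / 2 ^ k"

definition useless :: "nat \<Rightarrow> (int list \<Rightarrow> real) \<Rightarrow> (int list \<Rightarrow> real) \<Rightarrow> bool" where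
  "useless k P Q \<longleftrightarrow> (\<forall>\<epsilon>>0. \<exists>n I. valid_instance k n I \<and>
      inst_opt n P I = 1 \<and> inst_opt n Q I \<le> E_unif k Q + \<epsilon>)"

fun flip_pmf :: "real \<Rightarrow> int list \<Rightarrow> int list pmf" where
  "flip_pmf p [] = return_pmf []"
| "flip_pmf p (c # cs) =
     bind_pmf (bernoulli_pmf p) (\<lambda>f. map_pmf (\<lambda>ys. (if f then - c else c) # ys) (flip_pmf p cs))"

definition noisy :: "int list pmf \<Rightarrow> real \<Rightarrow> int list pmf" where
  "noisy \<mu> p = bind_pmf \<mu> (flip_pmf p)"

definition Opt :: "(int list \<Rightarrow> real) \<Rightarrow> int list pmf \<Rightarrow> real" where
  "Opt Q \<mu> = (SUP p\<in>{0..1}. measure_pmf.expectation (noisy \<mu> p) Q)"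

end

theory Submission
  imports Defs
begin


lemma E_fin:
  fixes f :: "'a \<Rightarrow> real"
  assumes "finite A" "set_pmf M \<subseteq> A"
  shows "measure_pmf.expectation M f = (\<Sum>a\<in>A. pmf M a * f a)"
  using assms by (subst integral_measure_pmf[of A]) auto

lemma E_bind_fin:
  fixes f :: "'b \<Rightarrow> real"
  assumes fM: "finite (set_pmf M)" and fN: "\<And>x. x \<in> set_pmf M \<Longrightarrow> finite (set_pmf (N x))"
  shows "measure_pmf.expectation (bind_pmf M N) f =
         measure_pmf.expectation M (\<lambda>x. measure_pmf.expectation (N x) f)"
proof -
  define B where "B = set_pmf (bind_pmf M N)"
  have fB: "finite B" unfolding B_def using fM fN by (auto simp: set_bind_pmf)
  have sub: "set_pmf (N a) \<subseteq> B" if "a \<in> set_pmf M" for a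
    using that unfolding B_def by (auto simp: set_bind_pmf)
  have "measure_pmf.expectation (bind_pmf M N) f = (\<Sum>b\<in>B. pmf (bind_pmf M N) b * f b)"
    using fB by (intro E_fin) (auto simp: B_def)
  also have "\<dots> = (\<Sum>b\<in>B. (\<Sum>a\<in>set_pmf M. pmf M a * pmf (N a) b) * f b)"
    by (intro sum.cong refl, subst pmf_bind, subst E_fin[OF fM]) auto
  also have "\<dots> = (\<Sum>a\<in>set_pmf M. pmf M a * (\<Sum>b\<in>B. pmf (N a) b * f b))"
    by (simp add: sum_distrib_left sum_distrib_right mult_ac sum.swap[of _ B])
  also have "\<dots> = (\<Sum>a\<in>set_pmf M. pmf M a * measure_pmf.expectation (N a) f)"
    using fB sub by (intro sum.cong refl) (simp add: E_fin)
  also have "\<dots> = measure_pmf.expectation M (\<lambda>x. measure_pmf.expectation (N x) f)"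
    using fM by (subst E_fin[OF fM]) auto
  finally show ?thesis .
qed

lemma set_flip0: "z \<in> set_pmf (flip_pmf p y) \<Longrightarrow> length z = length y \<and> (\<forall>u\<in>set z. u \<in> set y \<or> - u \<in> set y)"
proof (induction y arbitrary: z)
  case (Cons c cs)
  then show ?case by (auto simp: set_bind_pmf) (metis Cons.IH)+
qed auto

lemma set_flip: "set_pmf (flip_pmf p y) \<subseteq> {z. length z = length y \<and> set z \<subseteq> set y \<union> uminus ` set y}"
  using set_flip0[of _ p y] by (auto simp: image_iff) (metis minus_minus)

lemma finite_flip: "finite (set_pmf (flip_pmf p y))"
proof -
  have "finite {z. set z \<subseteq> set y \<union> uminus ` set y \<and> length z = length y}"
    by (rule finite_lists_length_eq) auto
  then have "finite {z. length z = length y \<and> set z \<subseteq> set y \<union> uminus ` set y}"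
    by (simp add: conj_commute)
  then show ?thesis using set_flip[of p y] by (rule finite_subset[rotated])
qed

lemma finite_cube: "finite (cube k)"
proof -
  have "finite {xs. set xs \<subseteq> {-1,1::int} \<and> length xs = k}"
    by (rule finite_lists_length_eq) auto
  then show ?thesis unfolding cube_def by (rule finite_subset[rotated]) auto
qed

lemma set_flip_cube: "y \<in> cube k \<Longrightarrow> set_pmf (flip_pmf p y) \<subseteq> cube k"
  using set_flip0[of _ p y] unfolding cube_def by fastforce

lemma E_flip_Cons:
  fixes f :: "int list \<Rightarrow> real"
  assumes "0 \<le> p" "p \<le> 1"
  shows "measure_pmf.expectation (flip_pmf p (c # cs)) f =
     (1 - p) * measure_pmf.expectation (flip_pmf p cs) (\<lambda>ys. f (c # ys)) +
     p * measure_pmf.expectation (flip_pmf p cs) (\<lambda>ys. f (- c # ys))"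
  using assms
  by (simp add: E_bind_fin finite_flip)



definition flipv :: "(nat \<Rightarrow> bool) \<Rightarrow> int list \<Rightarrow> int list" where
  "flipv s y = map (\<lambda>i. if s i then - (y ! i) else y ! i) [0..<length y]"

definition Bp :: "real \<Rightarrow> nat \<Rightarrow> (nat \<Rightarrow> bool) pmf" where
  "Bp p n = Pi_pmf {..<n} False (\<lambda>_. bernoulli_pmf p)"

lemma flipv_Nil[simp]: "flipv s [] = []" by (simp add: flipv_def)

lemma flipv_Cons: "flipv s (c # cs) = (if s 0 then - c else c) # flipv (s \<circ> Suc) cs"
  unfolding flipv_def by (simp add: map_upt_Suc del: upt_Suc)

lemma length_flipv[simp]: "length (flipv s y) = length y" by (simp add: flipv_def)

lemma flip_as_Pi: "flip_pmf p y = map_pmf (\<lambda>s. flipv s y) (Bp p (length y))"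
proof (induction y)
  case Nil
  then show ?case by (simp add: Bp_def map_pmf_def bind_return_pmf)
next
  case (Cons c cs)
  define n where "n = length cs"
  have U: "{..<Suc n} = insert 0 (Suc ` {..<n})" using lessThan_Suc_eq_insert_0 by auto
  have bij: "Pi_pmf {..<n} False (\<lambda>_. bernoulli_pmf p) =
     map_pmf (\<lambda>g. g \<circ> Suc) (Pi_pmf (Suc ` {..<n}) False (\<lambda>_. bernoulli_pmf p))"
    by (rule Pi_pmf_bij_betw) (auto simp: bij_betw_def)
  have "map_pmf (\<lambda>s. flipv s (c # cs)) (Bp p (length (c # cs))) =
    map_pmf (\<lambda>s. flipv s (c # cs)) (do {y \<leftarrow> bernoulli_pmf p; f \<leftarrow> Pi_pmf (Suc ` {..<n}) False (\<lambda>_. bernoulli_pmf p); return_pmf (f(0 := y))})"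
    unfolding Bp_def n_def[symmetric] length_Cons U by (subst Pi_pmf_insert') auto
  also have "\<dots> = do {y \<leftarrow> bernoulli_pmf p; map_pmf (\<lambda>z. (if y then - c else c) # z)
       (map_pmf (\<lambda>s. flipv s cs) (map_pmf (\<lambda>g. g \<circ> Suc) (Pi_pmf (Suc ` {..<n}) False (\<lambda>_. bernoulli_pmf p))))}"
  proof -
    have e: "(f(0 := y)) \<circ> Suc = f \<circ> Suc" for f :: "nat \<Rightarrow> bool" and y by auto
    have i: "(\<lambda>y. bind_pmf (Pi_pmf (Suc ` {..<n}) False (\<lambda>_. bernoulli_pmf p)) (\<lambda>f. return_pmf (f(0 := y))))
       = (\<lambda>y. map_pmf (\<lambda>f. f(0 := y)) (Pi_pmf (Suc ` {..<n}) False (\<lambda>_. bernoulli_pmf p)))"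
      by (simp add: map_pmf_def)
    show ?thesis
      unfolding i map_bind_pmf pmf.map_comp
      by (intro bind_pmf_cong refl map_pmf_cong) (simp add: flipv_Cons o_def)
  qed
  also have "\<dots> = flip_pmf p (c # cs)"
    unfolding bij[symmetric] using Cons.IH unfolding Bp_def n_def by simp
  finally show ?case ..
qed

lemma length_restrict: "valid_constraint k n c \<Longrightarrow> length (restrict_str x c) = k"
  by (simp add: restrict_str_def valid_constraint_def)

lemma nth_restrict: "valid_constraint k n c \<Longrightarrow> j < k \<Longrightarrow> restrict_str x c ! j = snd c ! j * x ! (fst c ! j)"
  by (simp add: restrict_str_def valid_constraint_def)

lemma restrict_cube: "valid_constraint k n c \<Longrightarrow> x \<in> cube n \<Longrightarrow> restrict_str x c \<in> cube k"
proof -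
  assume v: "valid_constraint k n c" and x: "x \<in> cube n"
  have "restrict_str x c ! j \<in> {-1, 1}" if "j < k" for j
  proof -
    have "snd c ! j \<in> set (snd c)" using v that unfolding valid_constraint_def by simp
    then have "snd c ! j \<in> {-1,1}" using v unfolding valid_constraint_def by blast
    moreover have "fst c ! j \<in> set (fst c)" using v that unfolding valid_constraint_def by simp
    then have "fst c ! j < n" using v unfolding valid_constraint_def by blast
    then have "x ! (fst c ! j) \<in> {-1,1}" using x unfolding cube_def by (auto dest!: nth_mem)
    ultimately show ?thesis using nth_restrict[OF v that] by auto
  qed
  then have "\<forall>u\<in>set (restrict_str x c). u \<in> {-1,1}"
    by (metis in_set_conv_nth length_restrict[OF v])
  then show ?thesis using length_restrict[OF v] unfolding cube_def by auto
qed

lemma flip_marginal: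
  assumes v: "valid_constraint k n c" and lx: "length x = n"
  shows "map_pmf (\<lambda>z. restrict_str z c) (flip_pmf p x) = flip_pmf p (restrict_str x c)"
proof -
  obtain a b where c: "c = (a, b)" by (cases c)
  have la: "length a = k" and da: "distinct a" and sa: "set a \<subseteq> {..<n}"
    using v c unfolding valid_constraint_def by auto
  define h where "h j = (if j < k then a ! j else n + j)" for j
  have bij: "bij_betw h {..<k} (set a)"
  proof -
    have "bij_betw ((!) a) {..<k} (set a)" using bij_betw_nth[OF da] la by auto
    then show ?thesis by (rule bij_betw_cong[THEN iffD1, rotated]) (auto simp: h_def)
  qed
  have out: "h j \<notin> set a" if "j \<notin> {..<k}" for j using that sa by (auto simp: h_def)
  have P1: "Pi_pmf {..<k} False (\<lambda>_. bernoulli_pmf p) = map_pmf (\<lambda>g. g \<circ> h) (Pi_pmf (set a) False (\<lambda>_. bernoulli_pmf p))"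
    by (rule Pi_pmf_bij_betw[OF _ bij out]) auto
  have P2: "Pi_pmf (set a) False (\<lambda>_. bernoulli_pmf p) = map_pmf (\<lambda>f x. if x \<in> set a then f x else False) (Pi_pmf {..<n} False (\<lambda>_. bernoulli_pmf p))"
    by (rule Pi_pmf_subset[OF _ sa]) auto
  have pw: "restrict_str (flipv s x) c = flipv ((\<lambda>x. if x \<in> set a then s x else False) \<circ> h) (restrict_str x c)" for s
  proof (rule nth_equalityI)
    show "length (restrict_str (flipv s x) c) = length (flipv ((\<lambda>x. if x \<in> set a then s x else False) \<circ> h) (restrict_str x c))"
      using length_restrict[OF v] by simp
    fix j assume "j < length (restrict_str (flipv s x) c)"
    then have j: "j < k" using length_restrict[OF v] by simp
    have aj2: "a ! j \<in> set a" using j la by simp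
    have aj: "a ! j < n" "a ! j \<in> set a" using aj2 sa by auto
    show "restrict_str (flipv s x) c ! j = flipv ((\<lambda>x. if x \<in> set a then s x else False) \<circ> h) (restrict_str x c) ! j"
    proof -
      have fa: "fst c = a" using c by simp
      have "restrict_str (flipv s x) c ! j = snd c ! j * flipv s x ! (a ! j)"
        using nth_restrict[OF v j] fa by simp
      also have "\<dots> = snd c ! j * (if s (a ! j) then - (x ! (a ! j)) else x ! (a ! j))"
        using aj lx by (simp add: flipv_def)
      also have "\<dots> = flipv ((\<lambda>x. if x \<in> set a then s x else False) \<circ> h) (restrict_str x c) ! j"
        using j aj length_restrict[OF v, of x] nth_restrict[OF v j, of x] fa
        by (simp add: flipv_def h_def)
      finally show ?thesis .
    qed
  qed
  show ?thesis
    unfolding flip_as_Pi length_restrict[OF v] lx Bp_def P1 P2 pmf.map_comp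
    by (intro map_pmf_cong refl) (simp add: pw)
qed



definition Mb :: "nat \<Rightarrow> (int list \<Rightarrow> real) \<Rightarrow> real" where
  "Mb k Q = (\<Sum>z\<in>cube k. \<bar>Q z\<bar>)"

lemma Mb_bound: "z \<in> cube k \<Longrightarrow> \<bar>Q z\<bar> \<le> Mb k Q"
  unfolding Mb_def by (rule member_le_sum) (auto simp: finite_cube)

lemma Mb_nonneg: "0 \<le> Mb k Q"
  unfolding Mb_def by (auto intro: sum_nonneg)

lemma E_bound:
  fixes Q :: "int list \<Rightarrow> real"
  assumes "set_pmf M \<subseteq> cube k"
  shows "\<bar>measure_pmf.expectation M Q\<bar> \<le> Mb k Q"
proof -
  have "\<bar>measure_pmf.expectation M Q\<bar> = \<bar>\<Sum>z\<in>cube k. pmf M z * Q z\<bar>"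
    using E_fin[OF finite_cube assms, of Q] by simp
  also have "\<dots> \<le> (\<Sum>z\<in>cube k. \<bar>pmf M z * Q z\<bar>)" by (rule sum_abs)
  also have "\<dots> \<le> (\<Sum>z\<in>cube k. pmf M z * Mb k Q)"
    by (intro sum_mono) (auto simp: abs_mult intro: mult_left_mono Mb_bound)
  also have "\<dots> = Mb k Q"
    using assms by (simp add: sum_distrib_right[symmetric] sum_pmf_eq_1 finite_cube)
  finally show ?thesis .
qed

lemma set_noisy: "set_pmf \<mu> \<subseteq> cube k \<Longrightarrow> set_pmf (noisy \<mu> p) \<subseteq> cube k"
  unfolding noisy_def using set_flip_cube by (fastforce simp: set_bind_pmf)

lemma noisy_E:
  fixes Q :: "int list \<Rightarrow> real"
  assumes "set_pmf \<mu> \<subseteq> cube k"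
  shows "measure_pmf.expectation (noisy \<mu> p) Q = (\<Sum>y\<in>cube k. pmf \<mu> y * measure_pmf.expectation (flip_pmf p y) Q)"
proof -
  have f: "finite (set_pmf \<mu>)" using assms finite_cube by (rule finite_subset)
  show ?thesis unfolding noisy_def
    by (subst E_bind_fin[OF f finite_flip], rule E_fin[OF finite_cube assms])
qed

lemma cube_Suc: "cube (Suc k) = (Cons 1) ` cube k \<union> (Cons (-1)) ` cube k"
proof
  show "cube (Suc k) \<subseteq> (Cons 1) ` cube k \<union> (Cons (-1)) ` cube k"
  proof
    fix z assume "z \<in> cube (Suc k)"
    then obtain c cs where z: "z = c # cs" "length cs = k" "c \<in> {-1,1}" "set cs \<subseteq> {-1,1}"
      unfolding cube_def by (cases z) auto
    then show "z \<in> (Cons 1) ` cube k \<union> (Cons (-1)) ` cube k" unfolding cube_def by auto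
  qed
qed (auto simp: cube_def)

lemma sum_cube_Suc:
  fixes f :: "int list \<Rightarrow> real"
  shows "(\<Sum>z\<in>cube (Suc k). f z) = (\<Sum>z\<in>cube k. f (1 # z)) + (\<Sum>z\<in>cube k. f (- 1 # z))"
  unfolding cube_Suc
  by (subst sum.union_disjoint) (auto simp: finite_cube sum.reindex)

lemma flip_half:
  fixes Q :: "int list \<Rightarrow> real"
  assumes "y \<in> cube k"
  shows "measure_pmf.expectation (flip_pmf (1/2) y) Q = E_unif k Q"
  using assms
proof (induction y arbitrary: k Q)
  case Nil
  then have "k = 0" by (simp add: cube_def)
  moreover have "cube 0 = {[]}" by (auto simp: cube_def)
  ultimately show ?case by (simp add: E_unif_def)
next
  case (Cons c cs)
  then obtain k' where k: "k = Suc k'" and cs: "cs \<in> cube k'" and c: "c = 1 \<or> c = -1"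
    by (cases k) (auto simp: cube_def)
  have "measure_pmf.expectation (flip_pmf (1/2) (c # cs)) Q =
     (1/2) * E_unif k' (\<lambda>ys. Q (c # ys)) + (1/2) * E_unif k' (\<lambda>ys. Q (- c # ys))"
    by (subst E_flip_Cons) (auto simp: Cons.IH[OF cs])
  also have "\<dots> = E_unif k Q"
    using c unfolding E_unif_def k sum_cube_Suc by (auto simp: field_simps)
  finally show ?case .
qed

lemma Opt_upper:
  assumes "set_pmf \<mu> \<subseteq> cube k" "p \<in> {0..1}"
  shows "measure_pmf.expectation (noisy \<mu> p) Q \<le> Opt Q \<mu>"
  unfolding Opt_def
proof (rule cSUP_upper[OF assms(2)])
  show "bdd_above ((\<lambda>p. measure_pmf.expectation (noisy \<mu> p) Q) ` {0..1})"
    using E_bound[OF set_noisy[OF assms(1)], of _ Q] by (intro bdd_aboveI[of _ "Mb k Q"]) (auto simp: abs_le_iff)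
qed

lemma Opt_least:
  assumes "\<And>p. p \<in> {0..1} \<Longrightarrow> measure_pmf.expectation (noisy \<mu> p) Q \<le> C"
  shows "Opt Q \<mu> \<le> C"
  unfolding Opt_def by (rule cSUP_least) (use assms in auto)

lemma Opt_ge_E:
  assumes "set_pmf \<mu> \<subseteq> cube k"
  shows "E_unif k Q \<le> Opt Q \<mu>"
proof -
  have "measure_pmf.expectation (noisy \<mu> (1/2)) Q = (\<Sum>y\<in>cube k. pmf \<mu> y * E_unif k Q)"
    using assms by (simp add: noisy_E flip_half)
  also have "\<dots> = E_unif k Q"
    using assms by (simp add: sum_distrib_right[symmetric] sum_pmf_eq_1 finite_cube)
  finally show ?thesis using Opt_upper[OF assms, of "1/2" Q] by simp
qed



lemma sum_list_nth: "(\<Sum>c\<leftarrow>I. f c) = (\<Sum>j<length I. f (I ! j))"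
  by (simp add: sum_list_sum_nth atLeast0LessThan)

lemma inst_value_alt: "inst_value F I z = (\<Sum>j<length I. F (restrict_str z (I ! j))) / real (length I)"
  unfolding inst_value_def sum_list_nth by simp

lemma cube_ne: "cube n \<noteq> {}"
  by (auto simp: cube_def intro!: exI[of _ "replicate n 1"])

lemma inst_value_le_opt: "z \<in> cube n \<Longrightarrow> inst_value F I z \<le> inst_opt n F I"
  unfolding inst_opt_def by (rule Max_ge) (auto simp: finite_cube)

lemma inst_opt_in: "\<exists>z\<in>cube n. inst_value F I z = inst_opt n F I"
proof -
  have "inst_opt n F I \<in> inst_value F I ` cube n"
    unfolding inst_opt_def by (rule Max_in) (auto simp: finite_cube cube_ne)
  then show ?thesis by auto
qed

lemma inst_mu_E:
  fixes Q :: "int list \<Rightarrow> real"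
  assumes v: "valid_instance k n I" and x: "x \<in> cube n" and p: "p \<in> {0..1}"
  shows "measure_pmf.expectation
     (noisy (map_pmf (\<lambda>j. restrict_str x (I ! j)) (pmf_of_set {..<length I})) p) Q \<le> inst_opt n Q I"
proof -
  define m where "m = length I"
  have m: "m > 0" using v unfolding valid_instance_def m_def by simp
  have vc: "valid_constraint k n (I ! j)" if "j < m" for j
    using v that unfolding valid_instance_def m_def by auto
  have lx: "length x = n" using x by (simp add: cube_def)
  have sx: "set_pmf (flip_pmf p x) \<subseteq> cube n" by (rule set_flip_cube[OF x])
  have Ej: "measure_pmf.expectation (flip_pmf p (restrict_str x (I ! j))) Q =
       (\<Sum>z\<in>cube n. pmf (flip_pmf p x) z * Q (restrict_str z (I ! j)))" if "j < m" for j
  proof -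
    have "measure_pmf.expectation (flip_pmf p (restrict_str x (I ! j))) Q =
          measure_pmf.expectation (map_pmf (\<lambda>z. restrict_str z (I ! j)) (flip_pmf p x)) Q"
      by (simp add: flip_marginal[OF vc[OF that] lx])
    also have "\<dots> = measure_pmf.expectation (flip_pmf p x) (\<lambda>z. Q (restrict_str z (I ! j)))"
      by simp
    also have "\<dots> = (\<Sum>z\<in>cube n. pmf (flip_pmf p x) z * Q (restrict_str z (I ! j)))"
      by (rule E_fin[OF finite_cube sx])
    finally show ?thesis .
  qed
  have "measure_pmf.expectation
     (noisy (map_pmf (\<lambda>j. restrict_str x (I ! j)) (pmf_of_set {..<length I})) p) Q =
     measure_pmf.expectation (pmf_of_set {..<m}) (\<lambda>j. measure_pmf.expectation (flip_pmf p (restrict_str x (I ! j))) Q)"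
    unfolding noisy_def bind_map_pmf m_def
    using m[unfolded m_def] by (subst E_bind_fin) (auto simp: finite_flip lessThan_empty_iff)
  also have "\<dots> = (\<Sum>j<m. measure_pmf.expectation (flip_pmf p (restrict_str x (I ! j))) Q) / real m"
    using m by (subst integral_pmf_of_set) auto
  also have "\<dots> = (\<Sum>j<m. \<Sum>z\<in>cube n. pmf (flip_pmf p x) z * Q (restrict_str z (I ! j))) / real m"
    using Ej by simp
  also have "\<dots> = (\<Sum>z\<in>cube n. pmf (flip_pmf p x) z * inst_value Q I z)"
    unfolding inst_value_alt m_def[symmetric]
    by (subst sum.swap) (simp add: sum_divide_distrib sum_distrib_left)
  also have "\<dots> \<le> (\<Sum>z\<in>cube n. pmf (flip_pmf p x) z * inst_opt n Q I)"
    by (intro sum_mono mult_left_mono inst_value_le_opt) auto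
  also have "\<dots> = inst_opt n Q I"
    by (simp add: sum_distrib_right[symmetric] sum_pmf_eq_1[OF finite_cube sx])
  finally show ?thesis .
qed

lemma all_one:
  fixes f :: "'a \<Rightarrow> real"
  assumes "(\<Sum>c\<leftarrow>I. f c) = real (length I)" "\<And>c. c \<in> set I \<Longrightarrow> f c \<le> 1"
  shows "c \<in> set I \<Longrightarrow> f c = 1"
  using assms
proof (induction I)
  case (Cons a I)
  have le: "(\<Sum>c\<leftarrow>I. f c) \<le> (\<Sum>c\<leftarrow>I. 1)" using Cons.prems(3) by (intro sum_list_mono) auto
  have "(\<Sum>c\<leftarrow>I. (1::real)) = real (length I)" by (simp add: sum_list_triv)
  moreover have "f a \<le> 1" using Cons.prems(3) by simp
  ultimately have "f a = 1" "(\<Sum>c\<leftarrow>I. f c) = real (length I)" using le Cons.prems(2) by auto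
  then show ?case using Cons by auto
qed simp

lemma diag_subseq:
  fixes f :: "nat \<Rightarrow> 'a \<Rightarrow> real"
  assumes "finite A" "\<And>N a. a \<in> A \<Longrightarrow> \<bar>f N a\<bar> \<le> C"
  shows "\<exists>r. strict_mono r \<and> (\<forall>a\<in>A. convergent (\<lambda>N. f (r N) a))"
  using assms
proof (induction A rule: finite_induct)
  case empty
  show ?case by (intro exI[of _ id]) (auto simp: strict_mono_def)
next
  case (insert a A)
  then obtain r where r: "strict_mono r" "\<forall>b\<in>A. convergent (\<lambda>N. f (r N) b)" by auto
  have "bounded (range (\<lambda>N. f (r N) a))"
    using insert.prems by (intro boundedI[of _ C]) auto
  then obtain l s where s: "strict_mono s" "((\<lambda>N. f (r N) a) \<circ> s) \<longlonglongrightarrow> l"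
    using bounded_imp_convergent_subsequence by blast
  have "\<forall>b\<in>insert a A. convergent (\<lambda>N. f ((r \<circ> s) N) b)"
  proof
    fix b assume "b \<in> insert a A"
    then show "convergent (\<lambda>N. f ((r \<circ> s) N) b)"
    proof
      assume "b = a" then show ?thesis using s by (auto simp: convergent_def o_def)
    next
      assume "b \<in> A"
      then obtain L where "(\<lambda>N. f (r N) b) \<longlonglongrightarrow> L" using r by (auto simp: convergent_def)
      from LIMSEQ_subseq_LIMSEQ[OF this s(1)] show ?thesis by (auto simp: convergent_def o_def)
    qed
  qed
  moreover have "strict_mono (r \<circ> s)" using r(1) s(1) by (rule strict_mono_o)
  ultimately show ?case by blast
qed



lemma dir1_step:
  fixes P Q :: "int list \<Rightarrow> real"
  assumes Pb: "\<forall>x\<in>cube k. P x \<in> {0, 1}" and u: "useless k P Q" and e: "e > 0"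
  shows "\<exists>\<mu>. set_pmf \<mu> \<subseteq> {x \<in> cube k. P x = 1} \<and>
      (\<forall>p\<in>{0..1}. measure_pmf.expectation (noisy \<mu> p) Q \<le> E_unif k Q + e)"
proof -
  obtain n I where v: "valid_instance k n I" and o1: "inst_opt n P I = 1"
    and oQ: "inst_opt n Q I \<le> E_unif k Q + e"
    using u e unfolding useless_def by blast
  obtain x where x: "x \<in> cube n" and xv: "inst_value P I x = 1"
    using inst_opt_in[of n P I] o1 by auto
  have m: "length I > 0" using v unfolding valid_instance_def by simp
  have vc: "\<And>c. c \<in> set I \<Longrightarrow> valid_constraint k n c" using v unfolding valid_instance_def by auto
  have s: "(\<Sum>c\<leftarrow>I. P (restrict_str x c)) = real (length I)"
    using xv m unfolding inst_value_def by (simp add: field_simps)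
  have le1: "P (restrict_str x c) \<le> 1" if "c \<in> set I" for c
    using Pb restrict_cube[OF vc[OF that] x] by fastforce
  have one: "P (restrict_str x c) = 1" if "c \<in> set I" for c
    using all_one[of "\<lambda>c. P (restrict_str x c)" I, OF s le1 that] by simp
  define \<mu> where "\<mu> = map_pmf (\<lambda>j. restrict_str x (I ! j)) (pmf_of_set {..<length I})"
  have "set_pmf \<mu> \<subseteq> {x \<in> cube k. P x = 1}"
    unfolding \<mu>_def using m by (auto simp: lessThan_empty_iff intro!: one restrict_cube[OF vc x])
  moreover have "\<forall>p\<in>{0..1}. measure_pmf.expectation (noisy \<mu> p) Q \<le> E_unif k Q + e"
    using inst_mu_E[OF v x] oQ unfolding \<mu>_def by (blast intro: order_trans)
  ultimately show ?thesis by blast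
qed

lemma dir1:
  fixes P Q :: "int list \<Rightarrow> real"
  assumes Pb: "\<forall>x\<in>cube k. P x \<in> {0, 1}" and u: "useless k P Q"
  shows "\<exists>\<mu> :: int list pmf. set_pmf \<mu> \<subseteq> {x \<in> cube k. P x = 1} \<and> Opt Q \<mu> = E_unif k Q"
proof -
  define S where "S = {x \<in> cube k. P x = 1}"
  define E where "E = E_unif k Q"
  have "\<forall>N. \<exists>\<mu>. set_pmf \<mu> \<subseteq> S \<and>
      (\<forall>p\<in>{0..1}. measure_pmf.expectation (noisy \<mu> p) Q \<le> E + inverse (real (Suc N)))"
    unfolding S_def E_def by (intro allI dir1_step[OF Pb u]) simp
  then obtain ms where ms: "\<And>N. set_pmf (ms N) \<subseteq> S"
    "\<And>N p. p \<in> {0..1} \<Longrightarrow> measure_pmf.expectation (noisy (ms N) p) Q \<le> E + inverse (real (Suc N))"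
    by metis
  have SC: "S \<subseteq> cube k" unfolding S_def by auto
  obtain r where r: "strict_mono r" "\<forall>y\<in>cube k. convergent (\<lambda>N. pmf (ms (r N)) y)"
    using diag_subseq[of "cube k" "\<lambda>N y. pmf (ms N) y" 1] finite_cube by (auto simp: pmf_le_1)
  define l where "l y = lim (\<lambda>N. pmf (ms (r N)) y)" for y
  have conv: "(\<lambda>N. pmf (ms (r N)) y) \<longlonglongrightarrow> l y" if "y \<in> cube k" for y
    using r(2) that unfolding l_def convergent_LIMSEQ_iff by auto
  define g where "g y = (if y \<in> cube k then l y else 0)" for y
  have gnn: "0 \<le> g y" for y
    unfolding g_def using LIMSEQ_le_const[OF conv[of y], of 0] by auto
  have g0: "g y = 0" if "y \<notin> S" for y
  proof (cases "y \<in> cube k")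
    case True
    have "pmf (ms (r N)) y = 0" for N using ms(1) that by (meson pmf_eq_0_set_pmf subsetD)
    then have "(\<lambda>N. pmf (ms (r N)) y) \<longlonglongrightarrow> 0" by simp
    then show ?thesis using conv[OF True] LIMSEQ_unique unfolding g_def by (auto simp: True)
  qed (simp add: g_def)
  have sum1: "(\<Sum>y\<in>cube k. g y) = 1"
  proof -
    have "(\<lambda>N. \<Sum>y\<in>cube k. pmf (ms (r N)) y) \<longlonglongrightarrow> (\<Sum>y\<in>cube k. l y)"
      by (intro tendsto_sum conv)
    moreover have "(\<Sum>y\<in>cube k. pmf (ms (r N)) y) = 1" for N
      using ms(1) SC by (intro sum_pmf_eq_1 finite_cube) auto
    ultimately have "(\<lambda>N::nat. 1::real) \<longlonglongrightarrow> (\<Sum>y\<in>cube k. l y)" by simp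
    then have "(\<Sum>y\<in>cube k. l y) = 1" using LIMSEQ_unique[OF _ tendsto_const] by blast
    then show ?thesis unfolding g_def by simp
  qed
  have prob: "(\<integral>\<^sup>+x. ennreal (g x) \<partial>count_space UNIV) = 1"
  proof -
    have "(\<integral>\<^sup>+x. ennreal (g x) \<partial>count_space UNIV) = (\<Sum>x\<in>cube k. ennreal (g x))"
      by (rule nn_integral_count_space') (auto simp: finite_cube g_def)
    also have "\<dots> = ennreal (\<Sum>x\<in>cube k. g x)" by (rule sum_ennreal) (rule gnn)
    also have "\<dots> = 1" by (simp add: sum1)
    finally show ?thesis .
  qed
  define \<mu> where "\<mu> = embed_pmf g"
  have pmu: "pmf \<mu> y = g y" for y unfolding \<mu>_def by (rule pmf_embed_pmf[OF gnn prob])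
  have sS: "set_pmf \<mu> \<subseteq> S"
    using g0 by (auto simp: set_pmf_iff pmu) (metis g0)
  have sK: "set_pmf \<mu> \<subseteq> cube k" using sS SC by auto
  have "Opt Q \<mu> \<le> E"
  proof (rule Opt_least)
    fix p :: real assume p: "p \<in> {0..1}"
    have "(\<lambda>N. measure_pmf.expectation (noisy (ms (r N)) p) Q) \<longlonglongrightarrow>
          measure_pmf.expectation (noisy \<mu> p) Q"
    proof -
      have "(\<lambda>N. \<Sum>y\<in>cube k. pmf (ms (r N)) y * measure_pmf.expectation (flip_pmf p y) Q) \<longlonglongrightarrow>
          (\<Sum>y\<in>cube k. l y * measure_pmf.expectation (flip_pmf p y) Q)"
        by (intro tendsto_sum tendsto_mult_right conv)
      moreover have "(\<Sum>y\<in>cube k. l y * measure_pmf.expectation (flip_pmf p y) Q) =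
          measure_pmf.expectation (noisy \<mu> p) Q"
        using noisy_E[OF sK] by (simp add: pmu g_def)
      moreover have "measure_pmf.expectation (noisy (ms (r N)) p) Q =
          (\<Sum>y\<in>cube k. pmf (ms (r N)) y * measure_pmf.expectation (flip_pmf p y) Q)" for N
        using ms(1)[of "r N"] SC by (intro noisy_E) auto
      ultimately show ?thesis by simp
    qed
    moreover have "(\<lambda>N. E + inverse (real (Suc N))) \<longlonglongrightarrow> E"
      using tendsto_add[OF tendsto_const LIMSEQ_inverse_real_of_nat, of E] by simp
    moreover have "measure_pmf.expectation (noisy (ms (r N)) p) Q \<le> E + inverse (real (Suc N))" for N
    proof -
      have "N \<le> r N" using seq_suble[OF r(1)] by simp
      then have "inverse (real (Suc (r N))) \<le> inverse (real (Suc N))"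
        by (intro le_imp_inverse_le) auto
      then show ?thesis using ms(2)[OF p, of "r N"] by linarith
    qed
    ultimately show "measure_pmf.expectation (noisy \<mu> p) Q \<le> E"
      by (intro LIMSEQ_le) auto
  qed
  moreover have "E \<le> Opt Q \<mu>" unfolding E_def by (rule Opt_ge_E[OF sK])
  ultimately show ?thesis using sS unfolding S_def E_def by (intro exI[of _ \<mu>]) auto
qed



definition Lk :: "nat \<Rightarrow> nat \<Rightarrow> nat list set" where
  "Lk k n = {xs. set xs \<subseteq> {..<n} \<and> length xs = k}"

definition Dk :: "nat \<Rightarrow> nat \<Rightarrow> nat list set" where
  "Dk k n = {xs. length xs = k \<and> distinct xs \<and> set xs \<subseteq> {..<n}}"

lemma finite_Lk: "finite (Lk k n)" unfolding Lk_def by (rule finite_lists_length_eq) auto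
lemma card_Lk: "card (Lk k n) = n ^ k" unfolding Lk_def by (subst card_lists_length_eq) auto
lemma Dk_sub: "Dk k n \<subseteq> Lk k n" unfolding Dk_def Lk_def by auto
lemma finite_Dk: "finite (Dk k n)" using finite_subset[OF Dk_sub finite_Lk] .

lemma restrict_Cons: "restrict_str x (i # a, c # cs) = (c * x ! i) # restrict_str x (a, cs)"
  by (simp add: restrict_str_def)

lemma restrict_cube2:
  assumes "set a \<subseteq> {..<n}" "length a = k" "y \<in> cube k" "x \<in> cube n"
  shows "restrict_str x (a, y) \<in> cube k"
  using assms
proof (induction a arbitrary: y k)
  case Nil
  then show ?case by (simp add: restrict_str_def cube_def)
next
  case (Cons i a)
  then obtain c cs k' where y: "y = c # cs" and k: "k = Suc k'" and c: "c \<in> {-1,1}" and cs: "cs \<in> cube k'"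
    by (cases y) (auto simp: cube_def)
  have "i < length x" using Cons.prems unfolding cube_def by auto
  then have "x ! i \<in> set x" by simp
  then have "x ! i \<in> {-1, 1}" using Cons.prems unfolding cube_def by blast
  then have "c * x ! i \<in> {-1,1}" using c by auto
  moreover have "restrict_str x (a, cs) \<in> cube k'" using Cons cs k by auto
  ultimately show ?case using y k by (simp add: restrict_Cons cube_def)
qed

definition qf :: "nat \<Rightarrow> int list \<Rightarrow> real" where
  "qf n x = real (card {i\<in>{..<n}. x ! i = -1}) / real n"

lemma sum_pm:
  fixes h :: "int \<Rightarrow> real"
  assumes x: "x \<in> cube n"
  shows "(\<Sum>i<n. h (x ! i)) = real n * ((1 - qf n x) * h 1 + qf n x * h (-1))"
proof -
  define A where "A = {i\<in>{..<n}. x ! i = -1}"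
  have xi: "x ! i = 1 \<or> x ! i = -1" if "i < n" for i
  proof -
    have "x ! i \<in> set x" using x that by (simp add: cube_def)
    then show ?thesis using x unfolding cube_def by blast
  qed
  have "(\<Sum>i<n. h (x ! i)) = (\<Sum>i<n. if x ! i = -1 then h (-1) else h 1)"
    by (intro sum.cong refl) (use xi in fastforce)
  also have "\<dots> = real (card A) * h (-1) + real (card ({..<n} - A)) * h 1"
  proof -
    have e1: "{..<n} \<inter> {i. x ! i = -1} = A" "{..<n} \<inter> - {i. x ! i = -1} = {..<n} - A" by (auto simp: A_def)
    show ?thesis by (subst sum.If_cases) (simp_all add: e1)
  qed
  also have "card ({..<n} - A) = n - card A" by (subst card_Diff_subset) (auto simp: A_def)
  finally have S: "(\<Sum>i<n. h (x ! i)) = real (card A) * h (-1) + real (n - card A) * h 1" .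
  have "card A \<le> n" using card_mono[of "{..<n}" A] by (auto simp: A_def)
  then have "real (n - card A) = real n - real (card A)" by simp
  moreover have qA: "qf n x = real (card A) / real n" by (simp add: qf_def A_def)
  ultimately show ?thesis unfolding S qA
    by (cases "n = 0") (auto simp: field_simps)
qed

lemma all_tuples:
  fixes Q :: "int list \<Rightarrow> real"
  assumes x: "x \<in> cube n" and n: "n > 0"
  shows "length y = k \<Longrightarrow> (\<Sum>a\<in>Lk k n. Q (restrict_str x (a, y))) =
     real n ^ k * measure_pmf.expectation (flip_pmf (qf n x) y) Q"
proof (induction y arbitrary: k Q)
  case Nil
  then have "Lk k n = {[]}" by (auto simp: Lk_def)
  then show ?case using Nil by (simp add: restrict_str_def)
next
  case (Cons c cs)
  then obtain k' where k: "k = Suc k'" and lcs: "length cs = k'" by auto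
  have q: "0 \<le> qf n x" "qf n x \<le> 1"
  proof -
    have "card {i\<in>{..<n}. x ! i = -1} \<le> n" using card_mono[of "{..<n}" "{i\<in>{..<n}. x ! i = -1}"] by auto
    then show "0 \<le> qf n x" "qf n x \<le> 1" using n by (auto simp: qf_def)
  qed
  have L: "Lk (Suc k') n = (\<lambda>(a, i). i # a) ` (Lk k' n \<times> {..<n})"
    unfolding Lk_def by (rule lists_length_Suc_eq)
  have "(\<Sum>a\<in>Lk k n. Q (restrict_str x (a, c # cs))) =
        (\<Sum>(a, i)\<in>Lk k' n \<times> {..<n}. Q (restrict_str x (i # a, c # cs)))"
    unfolding k L by (subst sum.reindex[OF inj_split_Cons]) (simp add: case_prod_unfold)
  also have "\<dots> = (\<Sum>i<n. \<Sum>a\<in>Lk k' n. Q ((c * x ! i) # restrict_str x (a, cs)))"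
    by (subst sum.swap) (simp add: sum.cartesian_product restrict_Cons)
  also have "\<dots> = (\<Sum>i<n. real n ^ k' * measure_pmf.expectation (flip_pmf (qf n x) cs) (\<lambda>z. Q ((c * x ! i) # z)))"
    by (intro sum.cong refl) (rule Cons.IH[OF lcs])
  also have "\<dots> = real n * ((1 - qf n x) * (real n ^ k' * measure_pmf.expectation (flip_pmf (qf n x) cs) (\<lambda>z. Q ((c * 1) # z)))
        + qf n x * (real n ^ k' * measure_pmf.expectation (flip_pmf (qf n x) cs) (\<lambda>z. Q ((c * -1) # z))))"
    by (rule sum_pm[OF x])
  also have "\<dots> = real n ^ k * measure_pmf.expectation (flip_pmf (qf n x) (c # cs)) Q"
    unfolding k by (subst E_flip_Cons[OF q]) (simp add: algebra_simps)
  finally show ?case .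
qed

lemma distinct_bound:
  fixes Q :: "int list \<Rightarrow> real"
  assumes x: "x \<in> cube n" and n: "n > 0" and y: "y \<in> cube k"
  shows "(\<Sum>a\<in>Dk k n. Q (restrict_str x (a, y))) \<le>
     real (card (Dk k n)) * measure_pmf.expectation (flip_pmf (qf n x) y) Q
     + 2 * Mb k Q * (real n ^ k - real (card (Dk k n)))"
proof -
  define G where "G = measure_pmf.expectation (flip_pmf (qf n x) y) Q"
  define M where "M = Mb k Q"
  have ly: "length y = k" using y by (simp add: cube_def)
  have G: "G \<le> M" using E_bound[OF set_flip_cube[OF y], of "qf n x" Q] unfolding G_def M_def by simp
  have bnd: "- M \<le> Q (restrict_str x (a, y))" if "a \<in> Lk k n" for a
    using Mb_bound[OF restrict_cube2[of a n k y x], of Q] that y x unfolding Lk_def M_def by auto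
  have cL: "card (Lk k n - Dk k n) = n ^ k - card (Dk k n)"
    by (simp add: card_Diff_subset finite_Dk Dk_sub card_Lk)
  have cD: "card (Dk k n) \<le> n ^ k" using card_mono[OF finite_Lk Dk_sub] card_Lk by metis
  have "(\<Sum>a\<in>Dk k n. Q (restrict_str x (a, y))) =
        (\<Sum>a\<in>Lk k n. Q (restrict_str x (a, y))) - (\<Sum>a\<in>Lk k n - Dk k n. Q (restrict_str x (a, y)))"
    by (simp add: sum_diff finite_Lk Dk_sub)
  also have "\<dots> \<le> real n ^ k * G - (\<Sum>a\<in>Lk k n - Dk k n. - M)"
    using all_tuples[OF x n ly, of Q] unfolding G_def
    by (intro diff_mono sum_mono) (auto intro: bnd)
  also have "\<dots> = real n ^ k * G + M * (real n ^ k - real (card (Dk k n)))"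
    using cD by (simp add: cL of_nat_diff)
  also have "\<dots> \<le> real (card (Dk k n)) * G + 2 * M * (real n ^ k - real (card (Dk k n)))"
  proof -
    have "real (card (Dk k n)) \<le> real n ^ k" using cD by (metis of_nat_le_iff of_nat_power)
    then have "(real n ^ k - real (card (Dk k n))) * G \<le> (real n ^ k - real (card (Dk k n))) * M"
      by (intro mult_left_mono G) auto
    then show ?thesis by (simp add: algebra_simps)
  qed
  finally show ?thesis unfolding G_def M_def .
qed

lemma card_Dk_ge:
  assumes "k \<le> n"
  shows "real (n - k) ^ k \<le> real (card (Dk k n))"
proof -
  have "card (Dk k n) = \<Prod>{n - k + 1 .. n}"
    unfolding Dk_def using card_lists_distinct_length_eq[of "{..<n}" k] assms by (simp add: conj_ac)
  moreover have "(n - k) ^ k \<le> \<Prod>{n - k + 1 .. n}"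
  proof -
    have "(\<Prod>i\<in>{n - k + 1 .. n}. (n - k)) \<le> (\<Prod>i\<in>{n - k + 1 .. n}. i)"
      by (intro prod_mono) auto
    moreover have "card {n - k + 1 .. n} = k" using assms by simp
    ultimately show ?thesis by simp
  qed
  ultimately show ?thesis by (metis of_nat_le_iff of_nat_power)
qed

lemma ratio_lim: "(\<lambda>n. real n ^ k / real (n - k) ^ k) \<longlonglongrightarrow> 1"
proof -
  have "(\<lambda>n. inverse (1 - real k / real n) ^ k) \<longlonglongrightarrow> inverse (1 - 0) ^ k"
    by (intro tendsto_power tendsto_inverse tendsto_diff tendsto_const lim_const_over_n) auto
  moreover have "\<forall>\<^sub>F n in sequentially. inverse (1 - real k / real n) ^ k = real n ^ k / real (n - k) ^ k"
  proof (rule eventually_sequentiallyI[of "Suc k"])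
    fix n assume "Suc k \<le> n"
    then have "n > 0" "real (n - k) = real n - real k" by auto
    then show "inverse (1 - real k / real n) ^ k = real n ^ k / real (n - k) ^ k"
      by (simp add: field_simps power_divide)
  qed
  ultimately show ?thesis by (simp add: tendsto_cong)
qed



lemma qf_range: "n > 0 \<Longrightarrow> 0 \<le> qf n x \<and> qf n x \<le> 1"
proof -
  assume n: "n > 0"
  have "card {i\<in>{..<n}. x ! i = -1} \<le> n" using card_mono[of "{..<n}" "{i\<in>{..<n}. x ! i = -1}"] by auto
  then show ?thesis using n by (auto simp: qf_def)
qed

lemma sum_list_concat_map: "(\<Sum>x\<leftarrow>concat (map h xs). F x) = (\<Sum>y\<leftarrow>xs. \<Sum>x\<leftarrow>h y. F x)"
  by (induction xs) auto

lemma sum_list_concat_replicate: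
  fixes F :: "'a \<Rightarrow> real"
  shows "(\<Sum>x\<leftarrow>concat (replicate m L). F x) = real m * (\<Sum>x\<leftarrow>L. F x)"
  by (induction m) (auto simp: algebra_simps)

lemma restrict_ones:
  "length a = length y \<Longrightarrow> set a \<subseteq> {..<n} \<Longrightarrow> restrict_str (replicate n 1) (a, y) = y"
  by (induction a y rule: list_induct2) (auto simp: restrict_str_def)

lemma E_unif_bound: "\<bar>E_unif k Q\<bar> \<le> Mb k Q"
proof -
  have "\<bar>\<Sum>x\<in>cube k. Q x\<bar> \<le> Mb k Q" unfolding Mb_def by (rule sum_abs)
  moreover have "(1::real) \<le> 2 ^ k" by simp
  ultimately have "\<bar>\<Sum>x\<in>cube k. Q x\<bar> / 2 ^ k \<le> Mb k Q"
    using divide_left_mono[of 1 "2 ^ k" "\<bar>\<Sum>x\<in>cube k. Q x\<bar>"] by simp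
  then show ?thesis unfolding E_unif_def by simp
qed


lemma approx_weights:
  fixes Q :: "int list \<Rightarrow> real" and N :: nat
  assumes sK: "set_pmf \<mu> \<subseteq> S" and SK: "S \<subseteq> cube k"
    and opt: "Opt Q \<mu> = E_unif k Q" and q: "q \<in> {0..1}"
  defines "c \<equiv> \<lambda>y. nat \<lfloor>real N * pmf \<mu> y\<rfloor>"
  shows "(\<Sum>y\<in>S. real (c y) * measure_pmf.expectation (flip_pmf q y) Q)
         \<le> real (\<Sum>y\<in>S. c y) * E_unif k Q + 2 * Mb k Q * real (card S)"
proof -
  define E where "E = E_unif k Q"
  define M where "M = Mb k Q"
  define G where "G y = measure_pmf.expectation (flip_pmf q y) Q" for y
  have fS: "finite S" using SK finite_cube by (rule finite_subset)
  have sK2: "set_pmf \<mu> \<subseteq> cube k" using sK SK by auto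
  have sum1: "(\<Sum>y\<in>S. pmf \<mu> y) = 1" by (rule sum_pmf_eq_1[OF fS sK])
  have C1: "(\<Sum>y\<in>S. pmf \<mu> y * G y) \<le> E"
  proof -
    have "(\<Sum>y\<in>S. pmf \<mu> y * G y) = (\<Sum>y\<in>cube k. pmf \<mu> y * G y)"
      using sK by (intro sum.mono_neutral_left finite_cube SK) (auto simp: set_pmf_iff)
    also have "\<dots> = measure_pmf.expectation (noisy \<mu> q) Q"
      unfolding G_def by (rule noisy_E[OF sK2, symmetric])
    also have "\<dots> \<le> E" using Opt_upper[OF sK2 q, of Q] opt unfolding E_def by simp
    finally show ?thesis .
  qed
  have GE: "\<bar>G y - E\<bar> \<le> 2 * M" if "y \<in> S" for y
  proof -
    have "\<bar>G y\<bar> \<le> M" unfolding G_def M_def using that SK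
      by (intro E_bound set_flip_cube) auto
    moreover have "\<bar>E\<bar> \<le> M" unfolding E_def M_def by (rule E_unif_bound)
    ultimately show ?thesis by linarith
  qed
  have cb: "\<bar>real (c y) - real N * pmf \<mu> y\<bar> \<le> 1" for y
  proof -
    have nn: "0 \<le> real N * pmf \<mu> y" by simp
    have "real (c y) = real_of_int \<lfloor>real N * pmf \<mu> y\<rfloor>" unfolding c_def using nn by simp
    then show ?thesis by linarith
  qed
  have "(\<Sum>y\<in>S. real (c y) * G y) - real (\<Sum>y\<in>S. c y) * E = (\<Sum>y\<in>S. real (c y) * (G y - E))"
    by (simp add: sum_distrib_right sum_distrib_left algebra_simps sum_subtractf)
  also have "\<dots> = real N * ((\<Sum>y\<in>S. pmf \<mu> y * G y) - E * (\<Sum>y\<in>S. pmf \<mu> y))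
                 + (\<Sum>y\<in>S. (real (c y) - real N * pmf \<mu> y) * (G y - E))"
    by (simp add: sum_distrib_left sum_distrib_right algebra_simps sum_subtractf sum.distrib)
  also have "\<dots> \<le> 0 + (\<Sum>y\<in>S. 2 * M)"
  proof (rule add_mono)
    show "real N * ((\<Sum>y\<in>S. pmf \<mu> y * G y) - E * (\<Sum>y\<in>S. pmf \<mu> y)) \<le> 0"
      using C1 sum1 by (simp add: mult_nonneg_nonpos)
    show "(\<Sum>y\<in>S. (real (c y) - real N * pmf \<mu> y) * (G y - E)) \<le> (\<Sum>y\<in>S. 2 * M)"
    proof (rule sum_mono)
      fix y assume y: "y \<in> S"
      have "(real (c y) - real N * pmf \<mu> y) * (G y - E) \<le> \<bar>real (c y) - real N * pmf \<mu> y\<bar> * \<bar>G y - E\<bar>"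
        by (metis abs_ge_self abs_mult)
      also have "\<dots> \<le> 1 * (2 * M)"
        by (intro mult_mono cb GE y) auto
      finally show "(real (c y) - real N * pmf \<mu> y) * (G y - E) \<le> 2 * M" by simp
    qed
  qed
  finally show ?thesis unfolding G_def E_def M_def by (simp add: algebra_simps)
qed


lemma dir2:
  fixes P Q :: "int list \<Rightarrow> real"
  assumes Pb: "\<forall>x\<in>cube k. P x \<in> {0, 1}"
    and sS: "set_pmf \<mu> \<subseteq> {x \<in> cube k. P x = 1}" and opt: "Opt Q \<mu> = E_unif k Q"
  shows "useless k P Q"
  unfolding useless_def
proof (intro allI impI)
  fix \<epsilon> :: real assume \<epsilon>: "\<epsilon> > 0"
  define S where "S = {x \<in> cube k. P x = 1}"
  define E where "E = E_unif k Q"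
  define M where "M = Mb k Q"
  define s where "s = card S"
  have SK: "S \<subseteq> cube k" unfolding S_def by auto
  have fS: "finite S" using SK finite_cube by (rule finite_subset)
  have M0: "0 \<le> M" unfolding M_def by (rule Mb_nonneg)
  define N :: nat where "N = nat \<lceil>4 * M * s / \<epsilon>\<rceil> + s + 1"
  define c where "c y = nat \<lfloor>real N * pmf \<mu> y\<rfloor>" for y
  define T where "T = (\<Sum>y\<in>S. c y)"
  have sum1: "(\<Sum>y\<in>S. pmf \<mu> y) = 1" by (rule sum_pmf_eq_1[OF fS sS[folded S_def]])
  have T_ge: "real N - real s \<le> real T"
  proof -
    have "real N - real s = (\<Sum>y\<in>S. real N * pmf \<mu> y - 1)"
      by (simp add: sum_subtractf sum_distrib_left[symmetric] sum1 s_def)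
    also have "\<dots> \<le> (\<Sum>y\<in>S. real (c y))"
    proof (rule sum_mono)
      fix y
      have nn: "0 \<le> real N * pmf \<mu> y" by simp
      have "real (c y) = real_of_int \<lfloor>real N * pmf \<mu> y\<rfloor>" unfolding c_def using nn by simp
      then show "real N * pmf \<mu> y - 1 \<le> real (c y)" by linarith
    qed
    also have "\<dots> = real T" by (simp add: T_def)
    finally show ?thesis .
  qed
  have N_ge: "4 * M * s / \<epsilon> + s + 1 \<le> real N"
    unfolding N_def using real_nat_ceiling_ge[of "4 * M * s / \<epsilon>"] by simp
  have T1: "4 * M * s / \<epsilon> + 1 \<le> real T" using T_ge N_ge by linarith
  have Tpos: "0 < real T" using T1 M0 \<epsilon> by (smt (verit) divide_nonneg_pos mult_nonneg_nonneg of_nat_0_le_iff)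
  have Tbnd: "2 * M * s \<le> (\<epsilon> / 2) * real T"
  proof -
    have "4 * M * s / \<epsilon> \<le> real T" using T1 by linarith
    then have "4 * M * s \<le> real T * \<epsilon>" using \<epsilon> by (simp add: divide_le_eq)
    then show ?thesis by (simp add: mult_ac)
  qed
  define \<delta> where "\<delta> = \<epsilon> / (4 * M + 4)"
  have \<delta>: "\<delta> > 0" unfolding \<delta>_def using \<epsilon> M0 by simp
  have Md: "2 * M * \<delta> \<le> \<epsilon> / 2"
    unfolding \<delta>_def using \<epsilon> M0 by (simp add: field_simps)
  have "\<forall>\<^sub>F n in sequentially. real n ^ k / real (n - k) ^ k < 1 + \<delta>"
    using order_tendstoD(2)[OF ratio_lim, of "1 + \<delta>"] \<delta> by simp
  moreover have "\<forall>\<^sub>F n in sequentially. Suc k \<le> n" by (rule eventually_ge_at_top)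
  ultimately have "\<forall>\<^sub>F n in sequentially. real n ^ k / real (n - k) ^ k < 1 + \<delta> \<and> Suc k \<le> n"
    by (rule eventually_conj)
  then obtain n where rat: "real n ^ k / real (n - k) ^ k < 1 + \<delta>" and nk: "Suc k \<le> n"
    unfolding eventually_sequentially by auto
  have n0: "n > 0" using nk by simp
  define D where "D = Dk k n"
  define cD where "cD = real (card D)"
  define R where "R = real n ^ k - cD"
  have pk: "0 < real (n - k) ^ k" using nk by simp
  have cDge: "real (n - k) ^ k \<le> cD" unfolding cD_def D_def by (rule card_Dk_ge) (use nk in simp)
  have cDpos: "0 < cD" using pk cDge by linarith
  have Rbnd: "2 * M * R \<le> (\<epsilon> / 2) * cD"
  proof -
    have "real n ^ k / cD \<le> real n ^ k / real (n - k) ^ k"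
      by (intro divide_left_mono cDge) (use pk cDpos in auto)
    then have "real n ^ k / cD < 1 + \<delta>" using rat by linarith
    then have "real n ^ k < (1 + \<delta>) * cD" using cDpos by (simp add: divide_less_eq)
    then have "R \<le> \<delta> * cD" unfolding R_def by (simp add: algebra_simps)
    then have "2 * M * R \<le> 2 * M * (\<delta> * cD)" using M0 by (intro mult_left_mono) auto
    also have "\<dots> = (2 * M * \<delta>) * cD" by simp
    also have "\<dots> \<le> (\<epsilon> / 2) * cD" using Md cDpos by (intro mult_right_mono) auto
    finally show ?thesis .
  qed
  obtain sl where sl: "set sl = S" "distinct sl" using finite_distinct_list[OF fS] by blast
  obtain dl where dl: "set dl = D" "distinct dl" using finite_distinct_list[of D] finite_Dk unfolding D_def by blast
  define I where "I = concat (map (\<lambda>y. concat (replicate (c y) (map (\<lambda>a. (a, y)) dl))) sl)"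
  have sumI: "(\<Sum>x\<leftarrow>I. F x) = (\<Sum>y\<in>S. real (c y) * (\<Sum>a\<in>D. F (a, y)))" for F :: "nat list \<times> int list \<Rightarrow> real"
  proof -
    have "(\<Sum>x\<leftarrow>I. F x) = (\<Sum>y\<leftarrow>sl. real (c y) * (\<Sum>a\<leftarrow>dl. F (a, y)))"
      unfolding I_def sum_list_concat_map sum_list_concat_replicate by (simp add: o_def)
    also have "\<dots> = (\<Sum>y\<in>S. real (c y) * (\<Sum>a\<in>D. F (a, y)))"
      using sl dl by (simp add: sum_list_distinct_conv_sum_set)
    finally show ?thesis .
  qed
  have lenI: "real (length I) = real T * cD"
    using sumI[of "\<lambda>_. 1"] by (simp add: sum_list_triv T_def cD_def sum_distrib_right)
  have setI: "\<exists>y\<in>S. \<exists>a\<in>D. x = (a, y)" if "x \<in> set I" for x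
    using that sl dl unfolding I_def by (auto split: if_splits)
  have vc: "valid_constraint k n x" if xI: "x \<in> set I" for x
  proof -
    obtain y a where y: "y \<in> S" and a: "a \<in> D" and x: "x = (a, y)" using setI[OF xI] by blast
    have "y \<in> cube k" using y SK by auto
    then show ?thesis using a x unfolding valid_constraint_def D_def Dk_def cube_def by auto
  qed
  have Ine: "I \<noteq> []" using lenI Tpos cDpos by auto
  have v: "valid_instance k n I" unfolding valid_instance_def using Ine vc by auto
  have lpos: "0 < real (length I)" using lenI Tpos cDpos by simp
  define z1 :: "int list" where "z1 = replicate n 1"
  have z1: "z1 \<in> cube n" unfolding z1_def cube_def by auto
  have Pz1: "inst_value P I z1 = 1"
  proof -
    have "P (restrict_str z1 x) = 1" if xI: "x \<in> set I" for x
    proof -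
      obtain y a where y: "y \<in> S" and a: "a \<in> D" and x: "x = (a, y)" using setI[OF xI] by blast
      have "restrict_str z1 (a, y) = y"
        unfolding z1_def using a y SK by (intro restrict_ones) (auto simp: D_def Dk_def cube_def)
      then show ?thesis using x y by (simp add: S_def)
    qed
    then have "(\<Sum>x\<leftarrow>I. P (restrict_str z1 x)) = (\<Sum>x\<leftarrow>I. 1)"
      by (intro arg_cong[where f = sum_list] map_cong) auto
    then show ?thesis unfolding inst_value_def using lpos by (simp add: sum_list_triv)
  qed
  have Ple: "inst_value P I z \<le> 1" if z: "z \<in> cube n" for z
  proof -
    have "(\<Sum>x\<leftarrow>I. P (restrict_str z x)) \<le> (\<Sum>x\<leftarrow>I. 1)"
      by (intro sum_list_mono) (use Pb restrict_cube[OF vc z] in fastforce)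
    then show ?thesis unfolding inst_value_def using lpos by (simp add: sum_list_triv divide_le_eq)
  qed
  have Popt: "inst_opt n P I = 1"
  proof -
    obtain z where z: "z \<in> cube n" "inst_value P I z = inst_opt n P I" using inst_opt_in by blast
    then have "inst_opt n P I \<le> 1" using Ple by metis
    moreover have "1 \<le> inst_opt n P I" using inst_value_le_opt[OF z1, of P I] Pz1 by simp
    ultimately show ?thesis by simp
  qed
  have Qle: "inst_value Q I z \<le> E + \<epsilon>" if z: "z \<in> cube n" for z
  proof -
    define G where "G y = measure_pmf.expectation (flip_pmf (qf n z) y) Q" for y
    define A where "A y = (\<Sum>a\<in>D. Q (restrict_str z (a, y)))" for y
    have q: "qf n z \<in> {0..1}" using qf_range[OF n0] by auto
    have Ay: "A y \<le> cD * G y + 2 * M * R" if "y \<in> S" for y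
      using distinct_bound[OF z n0, of y k Q] that SK unfolding A_def G_def cD_def D_def M_def R_def by auto
    have "(\<Sum>y\<in>S. real (c y) * A y) \<le> (\<Sum>y\<in>S. real (c y) * (cD * G y + 2 * M * R))"
      by (intro sum_mono mult_left_mono Ay) auto
    also have "\<dots> = cD * (\<Sum>y\<in>S. real (c y) * G y) + 2 * M * R * real T"
      by (simp add: T_def sum_distrib_left sum_distrib_right sum.distrib algebra_simps)
    also have "\<dots> \<le> cD * (real T * E + 2 * M * s) + 2 * M * R * real T"
      using approx_weights[OF sS[folded S_def] SK opt q, of N] cDpos
      unfolding c_def[symmetric] G_def[symmetric] T_def[symmetric] E_def M_def s_def
      by (intro add_right_mono mult_left_mono) auto
    also have "\<dots> \<le> real T * cD * (E + \<epsilon>)"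
    proof -
      have "cD * (2 * M * s) \<le> cD * ((\<epsilon> / 2) * real T)" using Tbnd cDpos by (intro mult_left_mono) auto
      moreover have "2 * M * R * real T \<le> (\<epsilon> / 2) * cD * real T" using Rbnd Tpos by (intro mult_right_mono) auto
      ultimately show ?thesis by (simp add: algebra_simps)
    qed
    finally have "(\<Sum>y\<in>S. real (c y) * A y) \<le> real T * cD * (E + \<epsilon>)" .
    moreover have "inst_value Q I z = (\<Sum>y\<in>S. real (c y) * A y) / (real T * cD)"
      unfolding inst_value_def sumI lenI A_def by simp
    ultimately show ?thesis using Tpos cDpos by (simp add: divide_le_eq mult_ac)
  qed
  have Qopt: "inst_opt n Q I \<le> E + \<epsilon>"
    using inst_opt_in[of n Q I] Qle by metis
  show "\<exists>n I. valid_instance k n I \<and> inst_opt n P I = 1 \<and> inst_opt n Q I \<le> E_unif k Q + \<epsilon>"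
    using v Popt Qopt unfolding E_def by blast
qed


theorem theorem3p2:
  fixes k :: nat and P Q :: "int list \<Rightarrow> real"
  assumes "\<forall>x\<in>cube k. P x \<in> {0, 1}"
  shows "useless k P Q \<longleftrightarrow>
    (\<exists>\<mu> :: int list pmf. set_pmf \<mu> \<subseteq> {x \<in> cube k. P x = 1} \<and> Opt Q \<mu> = E_unif k Q)"
  using dir1[OF assms] dir2[OF assms] by blast

end
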